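(* Let $(r_1,s_1),(r_2,s_2)$ be pairs of integers with $(r_1,s_1)\not\equiv(0,0)$, $(r_2,s_2)\not\equiv(0,0)$ and $(r_1,s_1)\not\equiv\pm(r_2,s_2)\bmod N$, and put $W(\tau;r_1,s_1,r_2,s_2)=\dfrac{E(\tau;r_1,s_1)-E(\tau;r_2,s_2)}{E(\tau;r_1,-s_1)-E(\tau;r_2,-s_2)}$. Assume $\{r_2\}\ge\{r_1\}$. Then the leading coefficient $c$ of the $q$-expansion of $W(\tau;r_1,s_1,r_2,s_2)$ is $c=-\zeta^{\mu(r_1)s_1+\mu(r_2)s_2}$ if $\{r_2\}=\{r_1\}\notin\{0,N/2\}$; $c=\zeta^{2\mu(r_1)s_1}$ if $\{r_2\}>\{r_1\}\neq0$; and $c=1$ otherwise.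
   Context: Fix an integer $N>2$, $\zeta=e^{2\pi i/N}$, $q=e^{2\pi i\tau/N}$. For an integer $x$, $\{x\}$ is the integer with $0\le\{x\}\le N/2$ and $x\equiv\pm\{x\}\bmod N$; $\mu(x)=1$ if $x\equiv 0$ or $N/2\bmod N$, and otherwise $\mu(x)\in\{\pm1\}$ is defined by $x\equiv\mu(x)\{x\}\bmod N$. For integers $(r,s)\not\equiv(0,0)\bmod N$, $E(\tau;r,s)=(2\pi i)^{-2}\wp((r\tau+s)/N;L_\tau)-1/12$, where $\wp(\cdot;L_\tau)$ is the Weierstrass $\wp$-function of the lattice $L_\tau=\mathbb Z+\mathbb Z\tau$, $\tau\in\mathbb H$. *)

theory Defs
  imports "HOL-Analysis.Analysis"
begin

definition wp :: "complex \<Rightarrow> complex \<Rightarrow> complex" where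
  "wp tau z = 1 / z\<^sup>2 +
     (\<Sum>\<^sub>\<infinity>(m, n) \<in> (UNIV :: (int \<times> int) set) - {(0, 0)}.
        1 / (z - (of_int m + of_int n * tau))\<^sup>2 - 1 / (of_int m + of_int n * tau)\<^sup>2)"

definition Efun :: "int \<Rightarrow> complex \<Rightarrow> int \<Rightarrow> int \<Rightarrow> complex" where
  "Efun N tau r s = wp tau ((of_int r * tau + of_int s) / of_int N) / (2 * pi * \<i>)\<^sup>2 - 1 / 12"

definition Wfun :: "int \<Rightarrow> complex \<Rightarrow> int \<Rightarrow> int \<Rightarrow> int \<Rightarrow> int \<Rightarrow> complex" where
  "Wfun N tau r1 s1 r2 s2 =
     (Efun N tau r1 s1 - Efun N tau r2 s2) / (Efun N tau r1 (- s1) - Efun N tau r2 (- s2))"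

definition zeta :: "int \<Rightarrow> complex" where
  "zeta N = exp (2 * pi * \<i> / of_int N)"

definition qpar :: "int \<Rightarrow> complex \<Rightarrow> complex" where
  "qpar N tau = exp (2 * pi * \<i> * tau / of_int N)"

text \<open>{x}: the integer in [0, N/2] with x = +-{x} mod N.\<close>
definition brace :: "int \<Rightarrow> int \<Rightarrow> int" where
  "brace N x = (if 2 * (x mod N) \<le> N then x mod N else N - x mod N)"

definition mu :: "int \<Rightarrow> int \<Rightarrow> int" where
  "mu N x = (if x mod N = 0 \<or> 2 * (x mod N) = N then 1
             else if 2 * (x mod N) < N then 1 else -1)"

text \<open>c is the leading coefficient of the q-expansion of f: f(tau) / q^k tends
  to c as Im tau tends to infinity, for some integer k.\<close>
definition leading_coeff_q :: "int \<Rightarrow> (complex \<Rightarrow> complex) \<Rightarrow> complex \<Rightarrow> bool" where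
  "leading_coeff_q N f c \<longleftrightarrow> c \<noteq> 0 \<and>
     (\<exists>k::int. ((\<lambda>tau. f tau / qpar N tau powi k) \<longlongrightarrow> c) (filtercomap Im at_top))"

end

theory Submission
  imports Defs
begin


lemma aux_refl1:
  fixes P S C X :: complex
  assumes "P \<noteq> 0" "S \<noteq> 0" "(P / S) * X = - (P * (C * P)) / S^2"
  shows "X = - P * C / S"
proof -
  have "X = (S / P) * ((P / S) * X)" using assms(1,2) by (simp add: field_simps)
  also have "\<dots> = (S / P) * (- (P * (C * P)) / S^2)" by (simp only: assms(3))
  also have "\<dots> = - P * C / S" using assms(1,2) by (simp add: field_simps power2_eq_square)
  finally show ?thesis .
qed

lemma aux_refl3:
  fixes P S C z :: complex
  shows "- (((0 * C + - S * (0 * z + 1 * P) * P) * S - P * C * (C * (0 * z + 1 * P))) / (S * S)) = P^2*(S^2+C^2)/S^2"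
proof -
  have "- ((0 * C + - S * (0 * z + 1 * P) * P) * S - P * C * (C * (0 * z + 1 * P))) = P^2*(S^2+C^2)" by algebra
  thus ?thesis by (metis minus_divide_left power2_eq_square)
qed

lemma aux_refl2:
  fixes P S C :: complex
  shows "(- P * (- S * P) * S - - P * C * (C * P)) / (S * S) = P^2 * (S^2 + C^2) / S^2"
proof -
  have "- P * (- S * P) * S - - P * C * (C * P) = P^2 * (S^2 + C^2)" by algebra
  thus ?thesis by (simp add: power2_eq_square)
qed

lemma digamma_reflection:
  fixes z :: complex assumes z: "z \<notin> \<int>"
  shows "Digamma z - Digamma (1 - z) = - of_real pi * cos (of_real pi * z) / sin (of_real pi * z)"
proof -
  have z1: "z \<notin> \<int>\<^sub>\<le>\<^sub>0" using z by (rule not_in_Ints_imp_not_in_nonpos_Ints)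
  have z2': "1 - z \<notin> \<int>" using z Ints_diff[of 1 "1-z"] by auto
  hence z2: "1 - z \<notin> \<int>\<^sub>\<le>\<^sub>0" by (rule not_in_Ints_imp_not_in_nonpos_Ints)
  have sn: "sin (of_real pi * z) \<noteq> 0" using z by (auto simp: sin_eq_0)
  have d1: "((\<lambda>z. Gamma z * Gamma (1 - z)) has_field_derivative
      (Gamma z * Digamma z * Gamma (1 - z) - Gamma z * (Gamma (1 - z) * Digamma (1 - z)))) (at z)"
    using z1 z2 by (auto intro!: derivative_eq_intros)
  have eq: "(\<lambda>z::complex. Gamma z * Gamma (1 - z)) = (\<lambda>z. of_real pi / sin (of_real pi * z))"
    by (rule ext, rule Gamma_reflection_complex)
  have d2: "((\<lambda>z. of_real pi / sin (of_real pi * z)) has_field_derivative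
      (- (of_real pi * (cos (of_real pi * z) * of_real pi)) / (sin (of_real pi * z))^2)) (at z)"
    using sn by (auto intro!: derivative_eq_intros simp: power2_eq_square)
  from d1 have d1': "((\<lambda>z. of_real pi / sin (of_real pi * z)) has_field_derivative
      (Gamma z * Digamma z * Gamma (1 - z) - Gamma z * (Gamma (1 - z) * Digamma (1 - z)))) (at z)"
    by (simp only: eq)
  have "Gamma z * Digamma z * Gamma (1 - z) - Gamma z * (Gamma (1 - z) * Digamma (1 - z))
        = - (of_real pi * (cos (of_real pi * z) * of_real pi)) / (sin (of_real pi * z))^2"
    using DERIV_unique[OF d1' d2] .
  hence "(Gamma z * Gamma (1 - z)) * (Digamma z - Digamma (1 - z))
        = - (of_real pi * (cos (of_real pi * z) * of_real pi)) / (sin (of_real pi * z))^2"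
    by (simp add: algebra_simps)
  hence "(of_real pi / sin (of_real pi * z)) * (Digamma z - Digamma (1 - z))
        = - (of_real pi * (cos (of_real pi * z) * of_real pi)) / (sin (of_real pi * z))^2"
    by (simp only: Gamma_reflection_complex)
  thus ?thesis using sn by (intro aux_refl1) simp_all
qed

lemma trigamma_reflection:
  fixes z :: complex assumes z: "z \<notin> \<int>"
  shows "Polygamma 1 z + Polygamma 1 (1 - z) = of_real pi ^ 2 / sin (of_real pi * z) ^ 2"
proof -
  have z1: "z \<notin> \<int>\<^sub>\<le>\<^sub>0" using z by (rule not_in_Ints_imp_not_in_nonpos_Ints)
  have z2': "1 - z \<notin> \<int>" using z Ints_diff[of 1 "1-z"] by auto
  hence z2: "1 - z \<notin> \<int>\<^sub>\<le>\<^sub>0" by (rule not_in_Ints_imp_not_in_nonpos_Ints)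
  have sn: "sin (of_real pi * z) \<noteq> 0" using z by (auto simp: sin_eq_0)
  have d1: "((\<lambda>z. Digamma z - Digamma (1 - z)) has_field_derivative
      (Polygamma 1 z + Polygamma 1 (1 - z))) (at z)"
    using z1 z2 by (auto intro!: derivative_eq_intros)
  have ev: "eventually (\<lambda>x. x \<in> - \<int>) (nhds z)"
    using z by (intro eventually_nhds_in_open) (auto simp: open_Compl closed_Ints)
  have ev2: "eventually (\<lambda>x. Digamma x - Digamma (1 - x) =
       - of_real pi * cos (of_real pi * x) / sin (of_real pi * x)) (nhds z)"
    using ev by eventually_elim (metis ComplD digamma_reflection)
  have d1': "((\<lambda>x. - of_real pi * cos (of_real pi * x) / sin (of_real pi * x)) has_field_derivative
      (Polygamma 1 z + Polygamma 1 (1 - z))) (at z)"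
    using d1 ev2 by (subst (asm) DERIV_cong_ev[OF refl ev2 refl])
  have d2: "((\<lambda>x. - of_real pi * cos (of_real pi * x) / sin (of_real pi * x)) has_field_derivative
      (of_real pi ^ 2 * (sin (of_real pi * z) ^ 2 + cos (of_real pi * z) ^ 2) / sin (of_real pi * z) ^ 2)) (at z)"
    apply (rule DERIV_cong)
     apply (auto intro!: derivative_eq_intros)[1]
    using sn apply simp
    apply (rule aux_refl3)
    done
  have "Polygamma 1 z + Polygamma 1 (1 - z) = 
      of_real pi ^ 2 * (sin (of_real pi * z) ^ 2 + cos (of_real pi * z) ^ 2) / sin (of_real pi * z) ^ 2"
    using DERIV_unique[OF d1' d2] .
  also have "sin (of_real pi * z) ^ 2 + cos (of_real pi * z) ^ 2 = 1"
    by (rule sin_cos_squared_add)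
  finally show ?thesis by simp
qed


lemma has_sum_int_split:
  fixes f :: "int \<Rightarrow> 'a::topological_comm_monoid_add"
  assumes "((\<lambda>k. f (- int k)) has_sum a) UNIV" "((\<lambda>k. f (int k + 1)) has_sum b) UNIV"
  shows "(f has_sum (a + b)) UNIV"
proof -
  have b1: "bij_betw (\<lambda>k::nat. - int k) UNIV {..0}"
    by (rule bij_betw_byWitness[where f'="\<lambda>m. nat (- m)"]) auto
  have b2: "bij_betw (\<lambda>k::nat. int k + 1) UNIV {0<..}"
    by (rule bij_betw_byWitness[where f'="\<lambda>m. nat (m - 1)"]) auto
  have h1: "(f has_sum a) {..0}" using assms(1) has_sum_reindex_bij_betw[OF b1] by blast
  have h2: "(f has_sum b) {0<..}" using assms(2) has_sum_reindex_bij_betw[OF b2] by blast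
  have "(f has_sum (a + b)) ({..0} \<union> {0<..})" by (rule has_sum_Un_disjoint[OF h1 h2]) auto
  also have "{..0} \<union> {0<..} = (UNIV :: int set)" by auto
  finally show ?thesis .
qed

lemma summable_norm_inv_sq_shift:
  fixes w :: complex
  shows "summable (\<lambda>k. norm (inverse ((w + of_nat k)^2)))"
proof (rule summable_comparison_test_ev)
  show "summable (\<lambda>k. 4 * inverse (real k ^ 2))"
    by (intro summable_mult inverse_power_summable) simp
  have "eventually (\<lambda>k. real k \<ge> 2 * norm w + 1) sequentially"
    using eventually_ge_at_top[of "nat \<lceil>2 * norm w + 1\<rceil>"]
    by eventually_elim linarith
  then show "eventually (\<lambda>k. norm (norm (inverse ((w + of_nat k)^2))) \<le> 4 * inverse (real k ^ 2)) sequentially"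
  proof eventually_elim
    case (elim k)
    have kp: "real k > 0" using elim by (smt (verit) norm_ge_zero)
    have "norm (w + of_nat k) \<ge> real k - norm w"
      using norm_triangle_ineq2[of "of_nat k" "- w"] by (simp add: add.commute)
    hence nk: "norm (w + of_nat k) \<ge> real k / 2" using elim by linarith
    have "norm (norm (inverse ((w + of_nat k)^2))) = inverse (norm (w + of_nat k) ^ 2)"
      by (simp add: norm_inverse norm_power)
    also have "\<dots> \<le> inverse ((real k / 2) ^ 2)"
      using nk kp by (intro le_imp_inverse_le power_mono) auto
    also have "\<dots> = 4 * inverse (real k ^ 2)" by (simp add: field_simps)
    finally show ?case .
  qed
qed

lemma trigamma_has_sum:
  fixes w :: complex assumes "w \<noteq> 0"
  shows "((\<lambda>k. inverse ((w + of_nat k)^2)) has_sum Polygamma 1 w) UNIV"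
proof -
  have "(\<lambda>k. inverse ((w + of_nat k)^Suc 1)) sums ((-1) ^ Suc 1 * Polygamma 1 w / fact 1)"
    by (rule Polygamma_LIMSEQ) (use assms in auto)
  hence "(\<lambda>k. inverse ((w + of_nat k)^2)) sums Polygamma 1 w" by (simp add: power2_eq_square)
  thus ?thesis by (intro norm_summable_imp_has_sum summable_norm_inv_sq_shift)
qed

lemma sum_inv_sq_int:
  fixes w :: complex assumes w: "w \<notin> \<int>"
  shows "((\<lambda>m::int. 1 / (w - of_int m)^2) has_sum (of_real pi ^ 2 / sin (of_real pi * w) ^ 2)) UNIV"
proof -
  have w0: "w \<noteq> 0" using w by auto
  have w1: "1 - w \<noteq> 0" using w by auto
  have h1: "((\<lambda>k. 1 / (w - of_int (- int k))^2) has_sum Polygamma 1 w) UNIV"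
    using trigamma_has_sum[OF w0] by (simp add: divide_inverse)
  have h2: "((\<lambda>k. 1 / (w - of_int (int k + 1))^2) has_sum Polygamma 1 (1 - w)) UNIV"
  proof -
    have "(w - of_int (int k + 1))^2 = ((1 - w) + of_nat k)^2" for k
      by (simp add: power2_eq_square algebra_simps)
    thus ?thesis using trigamma_has_sum[OF w1] by (simp add: divide_inverse)
  qed
  from has_sum_int_split[OF h1 h2] trigamma_reflection[OF w] show ?thesis by simp
qed


lemma lattice_lower:
  fixes \<tau> :: complex assumes "Im \<tau> > 0"
  obtains c where "c > 0" "\<And>m n::int. norm (of_int m + of_int n * \<tau>) \<ge> c * (\<bar>real_of_int m\<bar> + \<bar>real_of_int n\<bar>)"
proof -
  define a where "a = Re \<tau>"
  define b where "b = Im \<tau>"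
  define K where "K = \<bar>a\<bar> + 1"
  define c where "c = min (1/3) (b / (2*K+1))"
  have b: "b > 0" using assms by (simp add: b_def)
  have K: "K \<ge> 1" by (simp add: K_def)
  have c: "c > 0" using b K by (simp add: c_def)
  have bound: "norm (of_int m + of_int n * \<tau>) \<ge> c * (\<bar>real_of_int m\<bar> + \<bar>real_of_int n\<bar>)" for m n :: int
  proof -
    define x where "x = real_of_int m"
    define y where "y = real_of_int n"
    have re: "Re (of_int m + of_int n * \<tau>) = x + y * a" by (simp add: x_def y_def a_def)
    have im: "Im (of_int m + of_int n * \<tau>) = y * b" by (simp add: x_def y_def b_def)
    have n1: "norm (of_int m + of_int n * \<tau>) \<ge> \<bar>x + y * a\<bar>"
      using abs_Re_le_cmod[of "of_int m + of_int n * \<tau>"] re by simp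
    have n2: "norm (of_int m + of_int n * \<tau>) \<ge> \<bar>y\<bar> * b"
      using abs_Im_le_cmod[of "of_int m + of_int n * \<tau>"] im b by (simp add: abs_mult y_def b_def)
    show ?thesis
    proof (cases "\<bar>x\<bar> \<ge> 2 * K * \<bar>y\<bar>")
      case True
      have ya: "\<bar>y\<bar> * \<bar>a\<bar> \<le> \<bar>y\<bar> * K" by (intro mult_left_mono) (auto simp: K_def)
      have yK: "\<bar>y\<bar> * K \<le> \<bar>x\<bar> / 2" using True by (simp add: algebra_simps)
      have "\<bar>x + y * a\<bar> \<ge> \<bar>x\<bar> - \<bar>y\<bar> * \<bar>a\<bar>" using abs_triangle_ineq[of "x+y*a" "-(y*a)"] by (simp add: abs_mult)
      hence h1: "\<bar>x + y * a\<bar> \<ge> \<bar>x\<bar> / 2" using ya yK by linarith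
      have "\<bar>y\<bar> \<le> \<bar>y\<bar> * K" using K by (simp add: mult_le_cancel_left1)
      hence "\<bar>y\<bar> \<le> \<bar>x\<bar> / 2" using yK by linarith
      moreover have "c \<le> 1/3" unfolding c_def by (rule min.cobounded1)
      ultimately have "c * (\<bar>x\<bar> + \<bar>y\<bar>) \<le> (1/3) * (3/2 * \<bar>x\<bar>)"
        using c by (intro mult_mono) auto
      thus ?thesis using h1 n1 by (simp add: x_def[symmetric] y_def[symmetric])
    next
      case False
      hence "\<bar>x\<bar> + \<bar>y\<bar> \<le> (2*K+1) * \<bar>y\<bar>" by (simp add: algebra_simps)
      moreover have "c \<le> b / (2*K+1)" unfolding c_def by (rule min.cobounded2)
      ultimately have "c * (\<bar>x\<bar> + \<bar>y\<bar>) \<le> (b / (2*K+1)) * ((2*K+1) * \<bar>y\<bar>)"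
        using c by (intro mult_mono) auto
      also have "\<dots> = \<bar>y\<bar> * b" using K by (simp add: field_simps)
      finally show ?thesis using n2 by (simp add: x_def[symmetric] y_def[symmetric])
    qed
  qed
  show ?thesis by (rule that[OF c bound])
qed


definition gpow :: "int \<Rightarrow> real" where "gpow m = (\<bar>real_of_int m\<bar> + 1) powr (-3/2)"

lemma gpow_nonneg: "gpow m \<ge> 0" by (simp add: gpow_def)

lemma gpow_summable: "gpow summable_on UNIV"
proof -
  have s0: "summable (\<lambda>n. real n powr (-3/2))" by (subst summable_real_powr_iff) simp
  hence s1: "summable (\<lambda>n. real (Suc n) powr (-3/2))" by (subst summable_Suc_iff)
  hence s2: "summable (\<lambda>n. real (Suc (Suc n)) powr (-3/2))" by (subst summable_Suc_iff)
  have h1: "((\<lambda>k. gpow (- int k)) has_sum (\<Sum>n. real (Suc n) powr (-3/2))) UNIV"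
  proof -
    have "(\<lambda>n. real (Suc n) powr (-3/2)) sums (\<Sum>n. real (Suc n) powr (-3/2))"
      using s1 by (rule summable_sums)
    hence "((\<lambda>n. real (Suc n) powr (-3/2)) has_sum (\<Sum>n. real (Suc n) powr (-3/2))) UNIV"
      by (rule sums_nonneg_imp_has_sum) simp
    moreover have "gpow (- int k) = real (Suc k) powr (-3/2)" for k
      by (simp add: gpow_def add.commute)
    ultimately show ?thesis by simp
  qed
  have h2: "((\<lambda>k. gpow (int k + 1)) has_sum (\<Sum>n. real (Suc (Suc n)) powr (-3/2))) UNIV"
  proof -
    have "(\<lambda>n. real (Suc (Suc n)) powr (-3/2)) sums (\<Sum>n. real (Suc (Suc n)) powr (-3/2))"
      using s2 by (rule summable_sums)
    hence "((\<lambda>n. real (Suc (Suc n)) powr (-3/2)) has_sum (\<Sum>n. real (Suc (Suc n)) powr (-3/2))) UNIV"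
      by (rule sums_nonneg_imp_has_sum) simp
    moreover have "gpow (int k + 1) = real (Suc (Suc k)) powr (-3/2)" for k
    proof -
      have "\<bar>real_of_int (int k + 1)\<bar> + 1 = real (Suc (Suc k))" by simp
      thus ?thesis by (simp add: gpow_def)
    qed
    ultimately show ?thesis by simp
  qed
  from has_sum_int_split[OF h1 h2] show ?thesis by (auto simp: summable_on_def)
qed

lemma gpow_prod_summable: "(\<lambda>(m,n). gpow m * gpow n) summable_on (UNIV :: (int \<times> int) set)"
proof -
  define S where "S = infsum gpow UNIV"
  have hs: "(gpow has_sum S) UNIV" using gpow_summable by (simp add: S_def)
  have "(\<lambda>(m,n). gpow m * gpow n) summable_on (Sigma UNIV (\<lambda>_. UNIV))"
  proof (rule summable_on_SigmaI)
    show "((\<lambda>n. (\<lambda>(m,n). gpow m * gpow n) (m, n)) has_sum (gpow m * S)) UNIV" for m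
      using has_sum_cmult_right[OF hs, of "gpow m"] by simp
    show "(\<lambda>m. gpow m * S) summable_on UNIV"
      using gpow_summable by (rule summable_on_cmult_left)
    show "0 \<le> (\<lambda>(m,n). gpow m * gpow n) (m, n)" for m n by (simp add: gpow_nonneg)
  qed
  thus ?thesis by simp
qed

lemma rho_bound:
  fixes X Y :: real assumes "X \<ge> 0" "Y \<ge> 0" "X + Y \<ge> 1"
  shows "1 / (X + Y)^3 \<le> 4 * ((X + 1) powr (-3/2) * (Y + 1) powr (-3/2))"
proof -
  define P where "P = (X + 1) * (Y + 1)"
  have P0: "P > 0" using assms by (simp add: P_def)
  have "P \<le> ((X + Y + 2) / 2)^2"
    unfolding P_def using sum_squares_ge_zero[of "X - Y" 0] by (simp add: power2_eq_square field_simps)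
  also have "\<dots> \<le> (3 * (X + Y) / 2)^2" using assms by (intro power_mono) auto
  finally have Pb: "P \<le> (3 * (X + Y) / 2)^2" .
  define A where "A = 3 * (X + Y) / 2"
  have A: "A > 0" using assms by (simp add: A_def)
  have "P powr (3/2) \<le> (A^2) powr (3/2)"
    using Pb P0 unfolding A_def by (intro powr_mono2) auto
  also have "(A^2) powr (3/2) = A^3"
  proof -
    have "A powr 2 = A^2" by (rule powr_numeral[OF less_imp_le[OF A]])
    hence "(A^2) powr (3/2) = A powr (2*(3/2))" by (metis powr_powr)
    also have "\<dots> = A powr 3" by simp
    also have "\<dots> = A^3" by (rule powr_numeral[OF less_imp_le[OF A]])
    finally show ?thesis .
  qed
  also have "A^3 = (3 * (X + Y) / 2)^3" by (simp add: A_def)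
  finally have Pc: "P powr (3/2) \<le> 27/8 * (X + Y)^3" by (simp add: power3_eq_cube field_simps)
  have "(X + 1) powr (-3/2) * (Y + 1) powr (-3/2) = P powr (-3/2)"
    unfolding P_def using assms by (intro powr_mult[symmetric])
  also have "\<dots> = P powr (-(3/2))" by simp
  also have "\<dots> = 1 / P powr (3/2)" by (rule powr_minus_divide)
  finally have eq: "(X + 1) powr (-3/2) * (Y + 1) powr (-3/2) = 1 / P powr (3/2)" .
  have pos: "P powr (3/2) > 0" using P0 by simp
  have XY: "(X + Y)^3 > 0" using assms by simp
  have "1 / (X + Y)^3 \<le> 4 / (27/8 * (X + Y)^3)" using XY by (simp add: field_simps)
  also have "\<dots> \<le> 4 / P powr (3/2)"
  proof (intro divide_left_mono)
    show "0 < 27/8 * (X + Y)^3 * P powr (3/2)" using XY pos by simp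
  qed (use Pc in auto)
  finally show ?thesis using eq by simp
qed

definition rho :: "int \<times> int \<Rightarrow> real" where
  "rho = (\<lambda>(m,n). 1 / (\<bar>real_of_int m\<bar> + \<bar>real_of_int n\<bar>)^3)"

lemma rho_summable: "rho summable_on UNIV"
proof (rule summable_on_comparison_test[OF summable_on_cmult_right[OF gpow_prod_summable, of 4]])
  fix x :: "int \<times> int"
  obtain m n where x: "x = (m,n)" by (cases x)
  show "0 \<le> rho x" by (simp add: rho_def x)
  show "rho x \<le> 4 * (case x of (m, n) \<Rightarrow> gpow m * gpow n)"
  proof (cases "m = 0 \<and> n = 0")
    case True thus ?thesis by (simp add: rho_def x gpow_def)
  next
    case False
    hence "\<bar>real_of_int m\<bar> + \<bar>real_of_int n\<bar> \<ge> 1" by linarith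
    from rho_bound[OF abs_ge_zero abs_ge_zero this]
    have i: "1 / (\<bar>real_of_int m\<bar> + \<bar>real_of_int n\<bar>)^3 \<le>
        4 * ((\<bar>real_of_int m\<bar> + 1) powr (-3/2) * (\<bar>real_of_int n\<bar> + 1) powr (-3/2))" .
    have e1: "rho x = 1 / (\<bar>real_of_int m\<bar> + \<bar>real_of_int n\<bar>)^3" by (simp only: rho_def x prod.case)
    have e2: "(case x of (m, n) \<Rightarrow> gpow m * gpow n) =
         (\<bar>real_of_int m\<bar> + 1) powr (-3/2) * (\<bar>real_of_int n\<bar> + 1) powr (-3/2)"
      by (simp only: gpow_def x prod.case)
    show ?thesis unfolding e1 e2 by (rule i)
  qed
qed


lemma lattice_term_bound:
  fixes z w :: complex assumes "norm z \<le> norm w / 2" "w \<noteq> 0"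
  shows "norm (1/(z - w)^2 - 1/w^2) \<le> 10 * norm z / norm w ^ 3"
proof -
  have nw: "norm w > 0" using assms by simp
  have zw: "norm (z - w) \<ge> norm w / 2"
    using norm_triangle_ineq2[of w z] assms(1) by (simp add: norm_minus_commute)
  hence zw0: "z - w \<noteq> 0" using nw by auto
  have "1/(z - w)^2 - 1/w^2 = (1 * w^2 - (z - w)^2 * 1) / ((z - w)^2 * w^2)"
    using zw0 assms(2) by (simp add: diff_frac_eq)
  also have "1 * w^2 - (z - w)^2 * 1 = z * (2 * w - z)" by (simp add: power2_eq_square algebra_simps)
  finally have eq: "1/(z - w)^2 - 1/w^2 = z * (2 * w - z) / ((z - w)^2 * w^2)" .
  have n1: "norm (2 * w - z) \<le> 5/2 * norm w"
    using norm_triangle_ineq4[of "2*w" z] assms(1) by simp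
  have "norm (1/(z - w)^2 - 1/w^2) = norm z * norm (2 * w - z) / (norm (z - w)^2 * norm w ^ 2)"
    by (simp add: eq norm_mult norm_divide norm_power)
  also have "\<dots> \<le> norm z * (5/2 * norm w) / ((norm w / 2)^2 * norm w ^ 2)"
    using nw zw n1 by (intro frac_le mult_left_mono mult_right_mono power_mono mult_pos_pos) auto
  also have "\<dots> = 10 * norm z / norm w ^ 3" using nw by (simp add: field_simps power2_eq_square power3_eq_cube)
  finally show ?thesis .
qed

lemma lattice_term_summable:
  fixes \<tau> z :: complex assumes "Im \<tau> > 0"
  shows "(\<lambda>(m,n). 1/(z - (of_int m + of_int n*\<tau>))^2 - 1/(of_int m + of_int n*\<tau>)^2)
           summable_on (UNIV :: (int \<times> int) set)"
proof -
  obtain c where c: "c > 0" "\<And>m n::int. norm (of_int m + of_int n * \<tau>) \<ge> c * (\<bar>real_of_int m\<bar> + \<bar>real_of_int n\<bar>)"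
    using lattice_lower[OF assms] by blast
  define f where "f = (\<lambda>(m,n). 1/(z - (of_int m + of_int n*\<tau>))^2 - 1/(of_int m + of_int n*\<tau>)^2 :: complex)"
  define R where "R = 2 * norm z / c"
  define K where "K = \<lceil>R\<rceil>"
  define F where "F = {(m::int,n::int). \<bar>real_of_int m\<bar> + \<bar>real_of_int n\<bar> \<le> R}"
  have R0: "R \<ge> 0" using c by (simp add: R_def)
  have "F \<subseteq> {-K..K} \<times> {-K..K}"
    unfolding F_def K_def by (auto; linarith)
  hence finF: "finite F" by (rule finite_subset) auto
  have s1: "f summable_on F" using finF by (rule summable_on_finite)
  have "(\<lambda>x. norm (f x)) summable_on (UNIV - F)"
  proof (rule summable_on_comparison_test)
    show "(\<lambda>x. 10 * norm z / c^3 * rho x) summable_on (UNIV - F)"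
      by (intro summable_on_cmult_right summable_on_subset[OF rho_summable]) auto
  next
    fix x show "0 \<le> norm (f x)" by simp
  next
    fix x assume x: "x \<in> UNIV - F"
    obtain m n where xmn: "x = (m,n)" by (cases x)
    define w where "w = of_int m + of_int n * \<tau>"
    define S where "S = \<bar>real_of_int m\<bar> + \<bar>real_of_int n\<bar>"
    have SR: "S > R" using x by (simp add: F_def xmn S_def)
    hence S0: "S > 0" using R0 by linarith
    have wS: "norm w \<ge> c * S" using c(2)[of m n] by (simp add: w_def S_def)
    have "c * S > c * R" using SR c by simp
    also have "c * R = 2 * norm z" using c by (simp add: R_def)
    finally have zw: "norm z \<le> norm w / 2" using wS by linarith
    have "c * S > 0" using c S0 by simp
    note cS = this
    hence w0: "w \<noteq> 0" using wS by auto
    have "norm (f x) \<le> 10 * norm z / norm w ^ 3"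
      using lattice_term_bound[OF zw w0] by (simp add: f_def xmn w_def)
    also have "\<dots> \<le> 10 * norm z / (c * S) ^ 3"
    proof (intro divide_left_mono power_mono)
      have "norm w > 0" using wS cS by linarith
      thus "0 < norm w ^ 3 * (c * S) ^ 3" using cS by simp
    qed (use wS cS in auto)
    also have "\<dots> = 10 * norm z / c^3 * rho x"
      by (simp add: rho_def xmn S_def power_mult_distrib)
    finally show "norm (f x) \<le> 10 * norm z / c^3 * rho x" .
  qed
  hence s2: "f summable_on (UNIV - F)" by (rule abs_summable_summable)
  have "f summable_on (F \<union> (UNIV - F))" by (rule summable_on_union[OF s1 s2])
  thus ?thesis by (simp add: f_def)
qed



definition Gq :: "complex \<Rightarrow> complex" where "Gq x = x / (1 - x)^2"

lemma wp_has_sum: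
  fixes \<tau> z :: complex assumes "Im \<tau> > 0"
  shows "((\<lambda>(m,n). 1/(z - (of_int m + of_int n*\<tau>))^2 - 1/(of_int m + of_int n*\<tau>)^2) has_sum wp \<tau> z)
           (UNIV :: (int \<times> int) set)"
proof -
  define f where "f = (\<lambda>(m::int,n::int). 1/(z - (of_int m + of_int n*\<tau>))^2 - 1/(of_int m + of_int n*\<tau>)^2)"
  have "f summable_on UNIV" using lattice_term_summable[OF assms, of z] by (simp add: f_def)
  hence "f summable_on (UNIV - {(0,0)})" by (rule summable_on_subset) auto
  hence "(f has_sum infsum f (UNIV - {(0,0)})) (UNIV - {(0,0)})" by simp
  hence "(f has_sum (f (0,0) + infsum f (UNIV - {(0,0)}))) (insert (0,0) (UNIV - {(0,0)}))"
    by (intro has_sum_insert) auto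
  moreover have "insert (0,0) (UNIV - {(0,0)}) = (UNIV :: (int \<times> int) set)" by auto
  moreover have "f (0,0) + infsum f (UNIV - {(0,0)}) = wp \<tau> z"
    by (simp add: f_def wp_def)
  ultimately show ?thesis by (simp add: f_def)
qed

lemma wp_diff_has_sum:
  fixes \<tau> z1 z2 :: complex assumes "Im \<tau> > 0"
  shows "((\<lambda>(n,m). 1/(z1 - (of_int m + of_int n*\<tau>))^2 - 1/(z2 - (of_int m + of_int n*\<tau>))^2)
            has_sum (wp \<tau> z1 - wp \<tau> z2)) (UNIV :: (int \<times> int) set)"
proof -
  have "((\<lambda>x. (\<lambda>(m,n). 1/(z1 - (of_int m + of_int n*\<tau>))^2 - 1/(of_int m + of_int n*\<tau>)^2) x +
              - (\<lambda>(m,n). 1/(z2 - (of_int m + of_int n*\<tau>))^2 - 1/(of_int m + of_int n*\<tau>)^2) x)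
          has_sum (wp \<tau> z1 + - wp \<tau> z2)) (UNIV :: (int \<times> int) set)"
    by (intro has_sum_add has_sum_uminusI wp_has_sum assms)
  hence "((\<lambda>(m,n). 1/(z1 - (of_int m + of_int n*\<tau>))^2 - 1/(z2 - (of_int m + of_int n*\<tau>))^2)
            has_sum (wp \<tau> z1 - wp \<tau> z2)) (UNIV \<times> UNIV :: (int \<times> int) set)"
    by (simp add: case_prod_unfold)
  from iffD1[OF has_sum_swap this] show ?thesis by (simp add: case_prod_unfold)
qed

lemma wp_diff_iter:
  fixes \<tau> z1 z2 :: complex assumes "Im \<tau> > 0"
    and "\<And>n::int. z1 - of_int n * \<tau> \<notin> \<int>" "\<And>n::int. z2 - of_int n * \<tau> \<notin> \<int>"
  shows "((\<lambda>n::int. of_real pi ^ 2 / sin (of_real pi * (z1 - of_int n * \<tau>)) ^ 2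
                  - of_real pi ^ 2 / sin (of_real pi * (z2 - of_int n * \<tau>)) ^ 2)
           has_sum (wp \<tau> z1 - wp \<tau> z2)) UNIV"
proof (rule has_sum_Sigma'[where B = "\<lambda>_. UNIV"])
  show "((\<lambda>(n,m). 1/(z1 - (of_int m + of_int n*\<tau>))^2 - 1/(z2 - (of_int m + of_int n*\<tau>))^2)
            has_sum (wp \<tau> z1 - wp \<tau> z2)) (Sigma UNIV (\<lambda>_. UNIV :: int set))"
    using wp_diff_has_sum[OF assms(1)] by simp
next
  fix n :: int
  have e: "z - (of_int m + of_int n*\<tau>) = (z - of_int n * \<tau>) - of_int m" for z :: complex and m :: int
    by simp
  show "((\<lambda>m. (\<lambda>(n,m). 1/(z1 - (of_int m + of_int n*\<tau>))^2 - 1/(z2 - (of_int m + of_int n*\<tau>))^2) (n, m))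
          has_sum (of_real pi ^ 2 / sin (of_real pi * (z1 - of_int n * \<tau>)) ^ 2
                  - of_real pi ^ 2 / sin (of_real pi * (z2 - of_int n * \<tau>)) ^ 2)) UNIV"
    unfolding e case_prod_conv
    using has_sum_add[OF sum_inv_sq_int[OF assms(2)] has_sum_uminusI[OF sum_inv_sq_int[OF assms(3)]]]
    by simp
qed



lemma sin_sq_G:
  fixes w :: complex assumes "sin (of_real pi * w) \<noteq> 0"
  shows "of_real pi ^ 2 / sin (of_real pi * w) ^ 2 = (2 * of_real pi * \<i>)^2 * Gq (exp (2 * of_real pi * \<i> * w))"
proof -
  define u where "u = exp (\<i> * of_real pi * w)"
  have u0: "u \<noteq> 0" by (simp add: u_def)
  have s: "sin (of_real pi * w) = (u - inverse u) / (2 * \<i>)"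
    by (simp add: sin_exp_eq u_def exp_minus mult.assoc)
  have x: "exp (2 * of_real pi * \<i> * w) = u^2"
    by (simp add: u_def power2_eq_square exp_add[symmetric] algebra_simps)
  have d: "u - inverse u \<noteq> 0" using assms s by auto
  hence d2: "1 - u^2 \<noteq> 0" using u0 by (auto simp: field_simps power2_eq_square)
  have "of_real pi ^ 2 / ((u - inverse u) / (2 * \<i>)) ^ 2 = (2 * of_real pi * \<i>)^2 * (u^2 / (1 - u^2)^2)"
    using u0 d d2 by (simp add: field_simps power2_eq_square)
  thus ?thesis by (simp add: s x Gq_def)
qed



lemma z_not_int:
  fixes N r s n :: int and \<tau> :: complex
  assumes "N > 0" "\<not> (N dvd r \<and> N dvd s)" "Im \<tau> > 0"
  shows "(of_int r * \<tau> + of_int s) / of_int N - of_int n * \<tau> \<notin> \<int>"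
proof
  assume A: "(of_int r * \<tau> + of_int s) / of_int N - of_int n * \<tau> \<in> \<int>"
  then obtain k where k: "(of_int r * \<tau> + of_int s) / of_int N - of_int n * \<tau> = of_int k"
    by (auto elim!: Ints_cases)
  have N0: "(of_int N :: complex) \<noteq> 0" using assms by simp
  have k2: "of_int (r - N * n) * \<tau> + of_int s = of_int (N * k)"
    using k N0 by (simp add: field_simps)
  have "Im (of_int (r - N * n) * \<tau> + of_int s) = of_int (r - N*n) * Im \<tau>" by simp
  moreover have "Im (of_int (r - N * n) * \<tau> + of_int s) = Im (of_int (N * k) :: complex)" using k2 by simp
  ultimately have "of_int (r - N*n) * Im \<tau> = 0" by simp
  hence "real_of_int (r - N*n) = 0" using assms(3) by simp
  hence rn: "r = N * n" by (simp only: of_int_eq_0_iff)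
  hence "of_int s = (of_int (N * k) :: complex)" using k2 by simp
  hence "s = N * k" using of_int_eq_iff by blast
  thus False using assms(2) rn by auto
qed

lemma E_diff_has_sum:
  fixes N r1 s1 r2 s2 :: int and \<tau> :: complex
  assumes "N > 0" "\<not> (N dvd r1 \<and> N dvd s1)" "\<not> (N dvd r2 \<and> N dvd s2)" "Im \<tau> > 0"
  shows "((\<lambda>n::int. Gq (exp (2 * of_real pi * \<i> * ((of_int r1 * \<tau> + of_int s1) / of_int N - of_int n * \<tau>)))
                 - Gq (exp (2 * of_real pi * \<i> * ((of_int r2 * \<tau> + of_int s2) / of_int N - of_int n * \<tau>))))
          has_sum (Efun N \<tau> r1 s1 - Efun N \<tau> r2 s2)) UNIV"
proof -
  define z1 where "z1 = (of_int r1 * \<tau> + of_int s1) / of_int N"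
  define z2 where "z2 = (of_int r2 * \<tau> + of_int s2) / of_int N"
  have n1: "z1 - of_int n * \<tau> \<notin> \<int>" for n :: int
    unfolding z1_def by (rule z_not_int) (use assms in auto)
  have n2: "z2 - of_int n * \<tau> \<notin> \<int>" for n :: int
    unfolding z2_def by (rule z_not_int) (use assms in auto)
  have sn: "sin (of_real pi * w) \<noteq> 0" if "w \<notin> \<int>" for w :: complex
    using that by (auto simp: sin_eq_0)
  define c where "c = (1 / (2 * of_real pi * \<i>)^2 :: complex)"
  have h: "((\<lambda>n::int. c * (of_real pi ^ 2 / sin (of_real pi * (z1 - of_int n * \<tau>)) ^ 2
                  - of_real pi ^ 2 / sin (of_real pi * (z2 - of_int n * \<tau>)) ^ 2))
           has_sum (c * (wp \<tau> z1 - wp \<tau> z2))) UNIV"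
    by (intro has_sum_cmult_right wp_diff_iter assms n1 n2)
  have "c * (of_real pi ^ 2 / sin (of_real pi * (z1 - of_int n * \<tau>)) ^ 2
                  - of_real pi ^ 2 / sin (of_real pi * (z2 - of_int n * \<tau>)) ^ 2)
        = Gq (exp (2 * of_real pi * \<i> * (z1 - of_int n * \<tau>))) - Gq (exp (2 * of_real pi * \<i> * (z2 - of_int n * \<tau>)))"
    for n :: int
    apply (subst sin_sq_G[OF sn[OF n1]])
    apply (subst sin_sq_G[OF sn[OF n2]])
    apply (simp add: c_def right_diff_distrib)
    done
  moreover have "c * (wp \<tau> z1 - wp \<tau> z2) = Efun N \<tau> r1 s1 - Efun N \<tau> r2 s2"
    by (simp add: Efun_def z1_def z2_def c_def diff_divide_distrib)
  ultimately show ?thesis using h by (simp add: z1_def z2_def)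
qed


lemma Gq_inverse: "Gq (inverse y) = Gq y"
proof (cases "y = 0 \<or> y = 1")
  case True thus ?thesis by (auto simp: Gq_def)
next
  case False
  hence "y \<noteq> 0" "1 - y \<noteq> 0" by auto
  thus ?thesis by (simp add: Gq_def field_simps power2_eq_square)
qed

lemma Gq_bound:
  assumes "norm y \<le> 1/2" shows "norm (Gq y) \<le> 4 * norm y"
proof -
  have "norm (1 - y) \<ge> 1 - norm y" using norm_triangle_ineq2[of 1 y] by simp
  hence n: "norm (1 - y) \<ge> 1/2" using assms by linarith
  have "norm (Gq y) = norm y / norm (1 - y)^2" by (simp add: Gq_def norm_divide norm_power)
  also have "\<dots> \<le> norm y / (1/2)^2"
  proof (intro divide_left_mono power_mono)
    have "norm (1 - y) > 0" using n by linarith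
    thus "0 < norm (1 - y)^2 * (1/2)^2" by simp
  qed (use n in auto)
  also have "\<dots> = 4 * norm y" by (simp add: power2_eq_square)
  finally show ?thesis .
qed

lemma fam_term_bound:
  fixes d q :: complex
  assumes "norm d = 1" "norm q \<le> 1/2" "e \<ge> k" "e \<ge> 1"
  shows "norm (Gq (d * q^e)) \<le> 4 * (1/2)^k"
proof -
  have "norm q ^ e \<le> (1/2)^e" using assms by (intro power_mono) auto
  also have "(1/2::real)^e \<le> (1/2)^1" using assms by (intro power_decreasing) auto
  finally have y: "norm (d * q^e) \<le> 1/2" by (simp add: norm_mult norm_power assms(1))
  have "norm (Gq (d * q^e)) \<le> 4 * norm (d * q^e)" by (rule Gq_bound[OF y])
  also have "norm (d * q^e) = norm q ^ e" by (simp add: norm_mult norm_power assms(1))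
  also have "norm q ^ e \<le> (1/2)^e" using assms by (intro power_mono) auto
  also have "(1/2::real)^e \<le> (1/2)^k" using assms by (intro power_decreasing) auto
  finally show ?thesis by simp
qed

lemma fam_summable:
  fixes d q :: complex and Nn e0 :: nat
  assumes "norm d = 1" "norm q \<le> 1/2" "Nn \<ge> 1"
  shows "summable (\<lambda>k. norm (Gq (d * q^(e0 + Nn*k))))"
proof (rule summable_comparison_test_ev)
  show "summable (\<lambda>k. 4 * (1/2::real)^k)" by (intro summable_mult summable_geometric) auto
  show "eventually (\<lambda>k. norm (norm (Gq (d * q^(e0 + Nn*k)))) \<le> 4 * (1/2)^k) sequentially"
    using eventually_ge_at_top[of "1::nat"]
  proof eventually_elim
    case (elim k)
    have k1: "k \<le> e0 + Nn * k" using assms(3) by (metis le_add2 le_trans mult_le_mono1 mult_1)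
    have k2: "1 \<le> e0 + Nn*k" using elim k1 by linarith
    show ?case using fam_term_bound[OF assms(1,2) k1 k2] by simp
  qed
qed

lemma fam_has_sum:
  fixes d q :: complex and Nn e0 :: nat
  assumes "norm d = 1" "norm q \<le> 1/2" "Nn \<ge> 1"
  shows "((\<lambda>k. Gq (d * q^(e0 + Nn*k))) has_sum (\<Sum>k. Gq (d * q^(e0 + Nn*k)))) UNIV"
proof -
  have s: "summable (\<lambda>k. norm (Gq (d * q^(e0 + Nn*k))))" by (rule fam_summable[OF assms])
  hence "summable (\<lambda>k. Gq (d * q^(e0 + Nn*k)))" by (rule summable_norm_cancel)
  thus ?thesis using s by (intro norm_summable_imp_has_sum summable_sums)
qed

definition Pf :: "nat \<Rightarrow> complex \<Rightarrow> nat \<Rightarrow> complex \<Rightarrow> complex" where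
  "Pf Nn c a q = (\<Sum>k. Gq (c * q^(a + Nn*k))) + (\<Sum>k. Gq (inverse c * q^((Nn - a) + Nn*k)))"

lemma single_has_sum:
  fixes c q :: complex and Nn a :: nat and r :: int
  assumes "norm c = 1" "norm q \<le> 1/2" "q \<noteq> 0" "Nn \<ge> 1" "r mod int Nn = int a"
  shows "((\<lambda>n::int. Gq (c * q powi (r - int Nn * n))) has_sum Pf Nn c a q) UNIV"
proof -
  define t where "t = r div int Nn"
  have r: "r = int a + int Nn * t" using assms(5) by (simp add: t_def) (metis div_mult_mod_eq add.commute mult.commute)
  have c0: "c \<noteq> 0" using assms(1) by auto
  have ainv: "norm (inverse c) = 1" using assms(1) by (simp add: norm_inverse)
  have alt: "a < Nn" using assms(5) assms(4)
    by (metis of_nat_less_iff pos_mod_bound of_nat_0_less_iff less_le_trans zero_less_one)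
  define \<phi> where "\<phi> m = Gq (c * q powi (int a - int Nn * m))" for m :: int
  have h1: "((\<lambda>k. \<phi> (- int k)) has_sum (\<Sum>k. Gq (c * q^(a + Nn*k)))) UNIV"
  proof -
    have "\<phi> (- int k) = Gq (c * q^(a + Nn*k))" for k
    proof -
      have "int a - int Nn * (- int k) = int (a + Nn*k)" by simp
      thus ?thesis by (simp add: \<phi>_def power_int_of_nat del: of_nat_add)
    qed
    thus ?thesis using fam_has_sum[OF assms(1,2,4), of a] by simp
  qed
  have h2: "((\<lambda>k. \<phi> (int k + 1)) has_sum (\<Sum>k. Gq (inverse c * q^((Nn - a) + Nn*k)))) UNIV"
  proof -
    have "\<phi> (int k + 1) = Gq (inverse c * q^((Nn - a) + Nn*k))" for k
    proof -
      have e: "int a - int Nn * (int k + 1) = - int ((Nn - a) + Nn*k)" using alt by (simp add: algebra_simps of_nat_diff)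
      have "\<phi> (int k + 1) = Gq (c * inverse (q ^ ((Nn - a) + Nn*k)))"
        by (simp add: \<phi>_def e power_int_minus power_int_of_nat del: of_nat_add)
      also have "\<dots> = Gq (inverse (c * inverse (q ^ ((Nn - a) + Nn*k))))" by (rule Gq_inverse[symmetric])
      also have "inverse (c * inverse (q ^ ((Nn - a) + Nn*k))) = inverse c * q^((Nn - a) + Nn*k)"
        using c0 assms(3) by (simp add: field_simps)
      finally show ?thesis .
    qed
    thus ?thesis using fam_has_sum[OF ainv assms(2,4), of "Nn - a"] by simp
  qed
  have "(\<phi> has_sum Pf Nn c a q) UNIV" unfolding Pf_def by (rule has_sum_int_split[OF h1 h2])
  moreover have "bij_betw (\<lambda>m. m - t) UNIV (UNIV :: int set)"
    by (rule bij_betw_byWitness[where f'="\<lambda>m. m + t"]) auto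
  ultimately have "((\<lambda>n. \<phi> (n - t)) has_sum Pf Nn c a q) UNIV"
    using has_sum_reindex_bij_betw by blast
  moreover have "\<phi> (n - t) = Gq (c * q powi (r - int Nn * n))" for n
    by (simp add: \<phi>_def r algebra_simps)
  ultimately show ?thesis by simp
qed


lemma ev_small: "eventually (\<lambda>q::complex. q \<noteq> 0 \<and> norm q \<le> 1/2) (at 0)"
  unfolding eventually_at by (rule exI[of _ "1/2"]) (auto simp: dist_norm)

lemma tail_bound:
  fixes d q :: complex and Nn e0 m :: nat
  assumes "norm d = 1" "norm q \<le> 1/2" "Nn \<ge> 1" "m \<le> e0"
  shows "norm (\<Sum>k. Gq (d * q^(e0 + Nn*Suc k))) \<le> 8 * norm q ^ (m + 1)"
proof -
  have s: "summable (\<lambda>k. norm (Gq (d * q^((e0 + Nn) + Nn*k))))" by (rule fam_summable[OF assms(1-3)])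
  have e: "e0 + Nn * Suc k = (e0 + Nn) + Nn*k" for k by simp
  have bnd: "norm (Gq (d * q^(e0 + Nn*Suc k))) \<le> 4 * norm q ^ (m + 1) * (norm q)^k" for k
  proof -
    have y: "norm (d * q^(e0 + Nn*Suc k)) \<le> 1/2"
    proof -
      have "norm q ^ (e0 + Nn*Suc k) \<le> norm q ^ 1"
        using assms by (intro power_decreasing) auto
      thus ?thesis using assms by (simp add: norm_mult norm_power)
    qed
    have "norm (Gq (d * q^(e0 + Nn*Suc k))) \<le> 4 * norm q ^ (e0 + Nn*Suc k)"
      using Gq_bound[OF y] assms by (simp add: norm_mult norm_power)
    also have "norm q ^ (e0 + Nn*Suc k) \<le> norm q ^ (m + 1 + k)"
    proof -
      have "Suc k \<le> Nn * Suc k" using assms(3) by (metis mult_1 mult_le_mono1)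
      hence "m + 1 + k \<le> e0 + Nn * Suc k" using assms(4) by linarith
      thus ?thesis using assms by (intro power_decreasing) auto
    qed
    finally show ?thesis by (simp add: power_add mult.assoc)
  qed
  have nq: "norm q < 1" using assms by simp
  have g: "summable (\<lambda>k. 4 * norm q ^ (m + 1) * norm q ^ k)"
    using nq by (intro summable_mult summable_geometric) auto
  have s': "summable (\<lambda>k. norm (Gq (d * q^(e0 + Nn*Suc k))))" using s by (simp only: e)
  have "norm (\<Sum>k. Gq (d * q^(e0 + Nn*Suc k))) \<le> (\<Sum>k. norm (Gq (d * q^(e0 + Nn*Suc k))))"
    by (rule summable_norm[OF s'])
  also have "\<dots> \<le> (\<Sum>k. 4 * norm q ^ (m + 1) * norm q ^ k)"
    by (rule suminf_le[OF _ s' g]) (use bnd in auto)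
  also have "\<dots> = 4 * norm q ^ (m + 1) * (1 / (1 - norm q))"
    using suminf_geometric[of "norm q"] nq by (simp add: suminf_mult)
  also have "\<dots> \<le> 4 * norm q ^ (m + 1) * 2"
    using assms by (intro mult_left_mono) (auto simp: field_simps)
  finally show ?thesis by simp
qed

lemma fam_split:
  fixes d q :: complex and Nn e0 :: nat
  assumes "norm d = 1" "norm q \<le> 1/2" "Nn \<ge> 1"
  shows "(\<Sum>k. Gq (d * q^(e0 + Nn*k))) = Gq (d * q^e0) + (\<Sum>k. Gq (d * q^(e0 + Nn*Suc k)))"
proof -
  have "summable (\<lambda>k. Gq (d * q^(e0 + Nn*k)))"
    by (rule summable_norm_cancel[OF fam_summable[OF assms]])
  from suminf_split_head[OF this] show ?thesis by simp
qed

lemma fam_lim: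
  fixes d :: complex and Nn e0 m :: nat
  assumes "norm d = 1" "Nn \<ge> 1" "1 \<le> e0" "m \<le> e0"
  shows "((\<lambda>q. (\<Sum>k. Gq (d * q^(e0 + Nn*k))) / q^m) \<longlongrightarrow> (if e0 = m then d else 0)) (at 0)"
proof -
  define H where "H q = Gq (d * q^e0) / q^m" for q :: complex
  define T where "T q = (\<Sum>k. Gq (d * q^(e0 + Nn*Suc k))) / q^m" for q :: complex
  have ev: "eventually (\<lambda>q. (\<Sum>k. Gq (d * q^(e0 + Nn*k))) / q^m = H q + T q) (at 0)"
    using ev_small by eventually_elim (simp add: fam_split[OF assms(1) _ assms(2)] H_def T_def add_divide_distrib)
  have lim0: "((\<lambda>q::complex. C * norm q) \<longlongrightarrow> 0) (at 0)" for C :: real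
  proof -
    have "((\<lambda>q::complex. C * norm q) \<longlongrightarrow> C * norm (0::complex)) (at 0)"
      by (intro tendsto_intros)
    thus ?thesis by simp
  qed
  have T: "(T \<longlongrightarrow> 0) (at 0)"
  proof (rule Lim_null_comparison[OF _ lim0[of 8]])
    show "eventually (\<lambda>q. norm (T q) \<le> 8 * norm q) (at 0)"
      using ev_small
    proof eventually_elim
      case (elim q)
      hence q0: "norm q > 0" by simp
      have "norm (T q) = norm (\<Sum>k. Gq (d * q^(e0 + Nn*Suc k))) / norm q ^ m"
        by (simp add: T_def norm_divide norm_power)
      also have "\<dots> \<le> 8 * norm q ^ (m + 1) / norm q ^ m"
        using tail_bound[OF assms(1) _ assms(2,4), of q] elim q0 by (intro divide_right_mono) auto
      also have "\<dots> = 8 * norm q" using q0 by (simp add: field_simps)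
      finally show ?case .
    qed
  qed
  have H: "(H \<longlongrightarrow> (if e0 = m then d else 0)) (at 0)"
  proof (cases "e0 = m")
    case True
    have m1: "m \<ge> 1" using True assms by simp
    have ev2: "eventually (\<lambda>q. d / (1 - d * q^m)^2 = H q) (at 0)"
      using ev_small by eventually_elim (simp add: H_def Gq_def True field_simps)
    have "((\<lambda>q::complex. d / (1 - d * q^m)^2) \<longlongrightarrow> d / (1 - d * 0^m)^2) (at 0)"
      by (intro tendsto_intros) (use m1 in \<open>auto simp: power_0_left\<close>)
    moreover have "(0::complex)^m = 0" using m1 by simp
    ultimately have "((\<lambda>q::complex. d / (1 - d * q^m)^2) \<longlongrightarrow> d) (at 0)" by simp
    from tendsto_cong[THEN iffD1, OF ev2 this] True show ?thesis by simp
  next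
    case False
    have em: "e0 - m \<ge> 1" using False assms by simp
    have "(H \<longlongrightarrow> 0) (at 0)"
    proof (rule Lim_null_comparison[OF _ lim0[of 4]])
      show "eventually (\<lambda>q. norm (H q) \<le> 4 * norm q) (at 0)"
        using ev_small
      proof eventually_elim
        case (elim q)
        hence q0: "norm q > 0" by simp
        have y: "norm (d * q^e0) \<le> 1/2"
        proof -
          have "norm q ^ e0 \<le> norm q ^ 1" using elim assms by (intro power_decreasing) auto
          thus ?thesis using elim assms by (simp add: norm_mult norm_power)
        qed
        have "norm (H q) = norm (Gq (d * q^e0)) / norm q ^ m" by (simp add: H_def norm_divide norm_power)
        also have "\<dots> \<le> 4 * norm q ^ e0 / norm q ^ m"
          using Gq_bound[OF y] assms q0 by (intro divide_right_mono) (auto simp: norm_mult norm_power)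
        also have "norm q ^ e0 = norm q ^ m * norm q ^ (e0 - m)"
          using assms by (simp add: power_add[symmetric])
        also have "4 * (norm q ^ m * norm q ^ (e0 - m)) / norm q ^ m = 4 * norm q ^ (e0 - m)"
          using q0 by simp
        also have "norm q ^ (e0 - m) \<le> norm q ^ 1" using elim em by (intro power_decreasing) auto
        finally show ?case by simp
      qed
    qed
    thus ?thesis using False by simp
  qed
  have "((\<lambda>q. H q + T q) \<longlongrightarrow> (if e0 = m then d else 0) + 0) (at 0)" by (intro tendsto_add H T)
  hence "((\<lambda>q. H q + T q) \<longlongrightarrow> (if e0 = m then d else 0)) (at 0)" by simp
  thus ?thesis using tendsto_cong[OF ev] by simp
qed


lemma Pf_lim:
  fixes c :: complex and Nn a m :: nat
  assumes "norm c = 1" "Nn \<ge> 1" "a < Nn" "m \<le> a" "m \<le> Nn - a"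
  shows "((\<lambda>q. (Pf Nn c a q - (if a = 0 then Gq c else 0)) / q^m) \<longlongrightarrow>
           ((if a = m \<and> 0 < a then c else 0) + (if Nn - a = m then inverse c else 0))) (at 0)"
proof -
  have ci: "norm (inverse c) = 1" using assms(1) by (simp add: norm_inverse)
  have L2: "((\<lambda>q. (\<Sum>k. Gq (inverse c * q^((Nn - a) + Nn*k))) / q^m) \<longlongrightarrow>
              (if Nn - a = m then inverse c else 0)) (at 0)"
    by (rule fam_lim[OF ci assms(2)]) (use assms in auto)
  have L1: "((\<lambda>q. ((\<Sum>k. Gq (c * q^(a + Nn*k))) - (if a = 0 then Gq c else 0)) / q^m) \<longlongrightarrow>
              (if a = m \<and> 0 < a then c else 0)) (at 0)"
  proof (cases "a = 0")
    case False
    have "((\<lambda>q. (\<Sum>k. Gq (c * q^(a + Nn*k))) / q^m) \<longlongrightarrow> (if a = m then c else 0)) (at 0)"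
      by (rule fam_lim[OF assms(1,2)]) (use assms False in auto)
    thus ?thesis using False by simp
  next
    case True
    hence m0: "m = 0" using assms by simp
    have "((\<lambda>q. (\<Sum>k. Gq (c * q^(Nn + Nn*k))) / q^m) \<longlongrightarrow> (if Nn = m then c else 0)) (at 0)"
      by (rule fam_lim[OF assms(1,2)]) (use assms m0 in auto)
    hence lim: "((\<lambda>q. (\<Sum>k. Gq (c * q^(Nn + Nn*k)))) \<longlongrightarrow> 0) (at 0)" using m0 assms by simp
    have ev: "eventually (\<lambda>q. (\<Sum>k. Gq (c * q^(Nn + Nn*k))) =
                 ((\<Sum>k. Gq (c * q^(a + Nn*k))) - (if a = 0 then Gq c else 0)) / q^m) (at 0)"
      using ev_small
    proof eventually_elim
      case (elim q)
      have "(\<Sum>k. Gq (c * q^(0 + Nn*k))) = Gq (c * q^0) + (\<Sum>k. Gq (c * q^(0 + Nn*Suc k)))"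
        by (rule fam_split[OF assms(1) _ assms(2)]) (use elim in auto)
      thus ?case using True m0 by simp
    qed
    from tendsto_cong[THEN iffD1, OF ev lim] show ?thesis using True by simp
  qed
  have "((\<lambda>q. ((\<Sum>k. Gq (c * q^(a + Nn*k))) - (if a = 0 then Gq c else 0)) / q^m +
              (\<Sum>k. Gq (inverse c * q^((Nn - a) + Nn*k))) / q^m) \<longlongrightarrow>
           ((if a = m \<and> 0 < a then c else 0) + (if Nn - a = m then inverse c else 0))) (at 0)"
    by (rule tendsto_add[OF L1 L2])
  moreover have "((\<Sum>k. Gq (c * q^(a + Nn*k))) - (if a = 0 then Gq c else 0)) / q^m +
              (\<Sum>k. Gq (inverse c * q^((Nn - a) + Nn*k))) / q^m
         = (Pf Nn c a q - (if a = 0 then Gq c else 0)) / q^m" for q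
    by (simp add: Pf_def add_divide_distrib diff_divide_distrib)
  ultimately show ?thesis by simp
qed


lemma zeta_powi_exp: "zeta N powi x = exp (of_int x * (2 * of_real pi * \<i> / of_int N))"
  by (simp add: zeta_def exp_power_int)

lemma qpar_powi_exp: "qpar N \<tau> powi x = exp (of_int x * (2 * of_real pi * \<i> * \<tau> / of_int N))"
  by (simp add: qpar_def exp_power_int)

lemma zeta_nz: "zeta N \<noteq> 0" by (simp add: zeta_def)
lemma qpar_nz: "qpar N \<tau> \<noteq> 0" by (simp add: qpar_def)

lemma norm_zeta_powi: "norm (zeta N powi x) = 1"
proof -
  have "norm (zeta N) = 1" by (simp add: zeta_def norm_exp_eq_Re)
  thus ?thesis by (simp add: norm_power_int)
qed

lemma zeta_powi_eq_1:
  assumes "N > 0" shows "zeta N powi x = 1 \<longleftrightarrow> N dvd x"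
proof
  assume "N dvd x"
  then obtain k where k: "x = N * k" by auto
  have "of_int x * (2 * of_real pi * \<i> / of_int N) = \<i> * (of_int k * (of_real pi * 2))"
    using assms by (simp add: k field_simps)
  thus "zeta N powi x = 1" by (simp add: zeta_powi_exp exp_2pi_1_int)
next
  assume "zeta N powi x = 1"
  hence "exp (of_int x * (2 * of_real pi * \<i> / of_int N)) = 1" by (simp add: zeta_powi_exp)
  then obtain n where n: "Im (of_int x * (2 * of_real pi * \<i> / of_int N)) = real_of_int (2 * n) * pi"
    unfolding exp_eq_1 by blast
  have "Im (of_int x * (2 * of_real pi * \<i> / of_int N)) = real_of_int x * (2 * pi) / real_of_int N"
    by (simp add: Im_divide_of_real[where r="real_of_int N", simplified] )
  with n have "real_of_int x * (2 * pi) / real_of_int N = real_of_int (2 * n) * pi" by simp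
  hence "real_of_int x = real_of_int (N * n)" using assms by (simp add: field_simps)
  hence "x = N * n" by (simp only: of_int_eq_iff)
  thus "N dvd x" by simp
qed

lemma zeta_powi_eq:
  assumes "N > 0" shows "zeta N powi x = zeta N powi y \<longleftrightarrow> N dvd (x - y)"
proof -
  have "zeta N powi x = zeta N powi y \<longleftrightarrow> zeta N powi (x - y) = 1"
    using zeta_nz[of N] by (simp add: power_int_diff divide_eq_1_iff power_int_eq_0_iff)
  thus ?thesis using zeta_powi_eq_1[OF assms] by simp
qed

lemma exp_rewrite:
  fixes N r s n :: int assumes "N \<noteq> 0"
  shows "exp (2 * of_real pi * \<i> * ((of_int r * \<tau> + of_int s) / of_int N - of_int n * \<tau>))
         = zeta N powi s * qpar N \<tau> powi (r - N * n)"
proof -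
  have "2 * of_real pi * \<i> * ((of_int r * \<tau> + of_int s) / of_int N - of_int n * \<tau>)
        = of_int s * (2 * of_real pi * \<i> / of_int N) + of_int (r - N * n) * (2 * of_real pi * \<i> * \<tau> / of_int N)"
    using assms by (simp add: field_simps)
  thus ?thesis by (simp add: zeta_powi_exp qpar_powi_exp exp_add)
qed

lemma qpar_filterlim:
  assumes "N > 0" shows "filterlim (qpar N) (at 0) (filtercomap Im at_top)"
proof -
  define C where "C = 2 * pi / real_of_int N"
  have C: "C > 0" using assms by (simp add: C_def)
  have "filterlim (\<lambda>x. C * x) at_top at_top"
    by (rule filterlim_tendsto_pos_mult_at_top[OF tendsto_const C filterlim_ident])
  hence "filterlim (\<lambda>x. - (C * x)) at_bot at_top"
    by (simp add: filterlim_uminus_at_bot)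
  hence "((\<lambda>x. exp (- (C * x))) \<longlongrightarrow> 0) at_top"
    by (rule filterlim_compose[OF exp_at_bot])
  hence lim: "((\<lambda>\<tau>. exp (- (C * Im \<tau>))) \<longlongrightarrow> 0) (filtercomap Im at_top)"
    by (rule filterlim_compose[OF _ filterlim_filtercomap])
  have "norm (qpar N \<tau>) = exp (- (C * Im \<tau>))" for \<tau>
  proof -
    have "Re (2 * of_real pi * \<i> * \<tau> / of_int N) = - (C * Im \<tau>)"
      by (simp add: C_def Re_divide_of_real[where r="real_of_int N", simplified])
    thus ?thesis by (simp add: qpar_def norm_exp_eq_Re)
  qed
  with lim have "((\<lambda>\<tau>. norm (qpar N \<tau>)) \<longlongrightarrow> 0) (filtercomap Im at_top)" by simp
  hence "(qpar N \<longlongrightarrow> 0) (filtercomap Im at_top)" by (rule tendsto_norm_zero_cancel)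
  thus ?thesis by (simp add: filterlim_at qpar_nz)
qed

lemma ev_Im_pos: "eventually (\<lambda>\<tau>. Im \<tau> > 0) (filtercomap Im at_top)"
  by (auto simp: eventually_filtercomap intro: eventually_mono[OF eventually_gt_at_top[of 0]])


lemma E_diff_Pf:
  fixes N r1 s1 r2 s2 :: int and \<tau> :: complex
  assumes N: "N > 0" and h1: "\<not> (N dvd r1 \<and> N dvd s1)" and h2: "\<not> (N dvd r2 \<and> N dvd s2)"
    and im: "Im \<tau> > 0" and q: "norm (qpar N \<tau>) \<le> 1/2"
  shows "Efun N \<tau> r1 s1 - Efun N \<tau> r2 s2 =
         Pf (nat N) (zeta N powi s1) (nat (r1 mod N)) (qpar N \<tau>) -
         Pf (nat N) (zeta N powi s2) (nat (r2 mod N)) (qpar N \<tau>)"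
proof -
  have Nn: "nat N \<ge> 1" "int (nat N) = N" using N by auto
  have m1: "r1 mod int (nat N) = int (nat (r1 mod N))" using N by simp
  have m2: "r2 mod int (nat N) = int (nat (r2 mod N))" using N by simp
  have S1: "((\<lambda>n::int. Gq (zeta N powi s1 * qpar N \<tau> powi (r1 - int (nat N) * n))) has_sum
             Pf (nat N) (zeta N powi s1) (nat (r1 mod N)) (qpar N \<tau>)) UNIV"
    by (rule single_has_sum[OF norm_zeta_powi q qpar_nz Nn(1) m1])
  have S2: "((\<lambda>n::int. Gq (zeta N powi s2 * qpar N \<tau> powi (r2 - int (nat N) * n))) has_sum
             Pf (nat N) (zeta N powi s2) (nat (r2 mod N)) (qpar N \<tau>)) UNIV"
    by (rule single_has_sum[OF norm_zeta_powi q qpar_nz Nn(1) m2])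
  have S: "((\<lambda>n::int. Gq (zeta N powi s1 * qpar N \<tau> powi (r1 - int (nat N) * n)) +
                     - Gq (zeta N powi s2 * qpar N \<tau> powi (r2 - int (nat N) * n))) has_sum
             (Pf (nat N) (zeta N powi s1) (nat (r1 mod N)) (qpar N \<tau>) +
              - Pf (nat N) (zeta N powi s2) (nat (r2 mod N)) (qpar N \<tau>))) UNIV"
    by (rule has_sum_add[OF S1 has_sum_uminusI[OF S2]])
  have E: "((\<lambda>n::int. Gq (exp (2 * of_real pi * \<i> * ((of_int r1 * \<tau> + of_int s1) / of_int N - of_int n * \<tau>)))
                 - Gq (exp (2 * of_real pi * \<i> * ((of_int r2 * \<tau> + of_int s2) / of_int N - of_int n * \<tau>))))
          has_sum (Efun N \<tau> r1 s1 - Efun N \<tau> r2 s2)) UNIV"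
    by (rule E_diff_has_sum[OF N h1 h2 im])
  have N0: "N \<noteq> 0" using N by simp
  have E': "((\<lambda>n::int. Gq (zeta N powi s1 * qpar N \<tau> powi (r1 - int (nat N) * n)) +
                     - Gq (zeta N powi s2 * qpar N \<tau> powi (r2 - int (nat N) * n))) has_sum
             (Efun N \<tau> r1 s1 - Efun N \<tau> r2 s2)) UNIV"
    using E unfolding exp_rewrite[OF N0] Nn(2) by simp
  from has_sum_unique[OF E' S] show ?thesis by simp
qed


lemma Gq_eq_cases:
  fixes c1 c2 :: complex
  assumes "c1 \<noteq> 1" "c2 \<noteq> 1" "Gq c1 = Gq c2"
  shows "c1 = c2 \<or> c1 * c2 = 1"
proof -
  have d1: "(1 - c1)^2 \<noteq> 0" "(1 - c2)^2 \<noteq> 0" using assms by auto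
  from assms(3) have "c1 * (1 - c2)^2 = c2 * (1 - c1)^2"
    using d1 by (simp add: Gq_def field_simps)
  hence "(c1 - c2) * (1 - c1 * c2) = 0" by (simp add: power2_eq_square algebra_simps)
  thus ?thesis by auto
qed

lemma Gq_nz: "c \<noteq> 0 \<Longrightarrow> c \<noteq> 1 \<Longrightarrow> Gq c \<noteq> 0"
  by (simp add: Gq_def)

lemma sum_inv_eq_cases:
  fixes c1 c2 :: complex
  assumes "c1 \<noteq> 0" "c2 \<noteq> 0" "c1 + inverse c1 = c2 + inverse c2"
  shows "c1 = c2 \<or> c1 * c2 = 1"
proof -
  from assms(3) have "c1 * c2 * (c1 + inverse c1) = c1 * c2 * (c2 + inverse c2)" by simp
  moreover have "c1 * c2 * (c1 + inverse c1) = c1 * c1 * c2 + c2" using assms(1) by (simp add: field_simps)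
  moreover have "c1 * c2 * (c2 + inverse c2) = c1 * c2 * c2 + c1" using assms(2) by (simp add: field_simps)
  ultimately have "c1 * c1 * c2 + c2 = c1 * c2 * c2 + c1" by simp
  hence "(c1 - c2) * (c1 * c2 - 1) = 0" by (simp add: algebra_simps)
  thus ?thesis by auto
qed

lemma zeta_facts:
  fixes N s1 s2 :: int assumes N: "N > 0"
  shows "zeta N powi s1 * zeta N powi s2 = zeta N powi (s1 + s2)"
    and "inverse (zeta N powi s1) = zeta N powi (- s1)"
    and "zeta N powi s1 = zeta N powi s2 \<Longrightarrow> N dvd (s1 - s2)"
    and "zeta N powi s1 * zeta N powi s2 = 1 \<Longrightarrow> N dvd (s1 + s2)"
    and "zeta N powi s1 = 1 \<Longrightarrow> N dvd s1"
    and "zeta N powi s1 \<noteq> 0"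
proof -
  have z: "zeta N \<noteq> 0" by (rule zeta_nz)
  show a: "zeta N powi s1 * zeta N powi s2 = zeta N powi (s1 + s2)"
    using z by (simp add: power_int_add)
  show "inverse (zeta N powi s1) = zeta N powi (- s1)" by (simp add: power_int_minus)
  show "zeta N powi s1 \<noteq> 0" using z by (simp add: power_int_eq_0_iff)
  show "zeta N powi s1 = 1 \<Longrightarrow> N dvd s1" using zeta_powi_eq_1[OF N] by simp
  show "zeta N powi s1 * zeta N powi s2 = 1 \<Longrightarrow> N dvd (s1 + s2)" using a zeta_powi_eq_1[OF N] by simp
  assume e: "zeta N powi s1 = zeta N powi s2"
  have "zeta N powi (s1 - s2) = zeta N powi s1 / zeta N powi s2" using z by (simp add: power_int_diff)
  also have "\<dots> = 1" using e z by (simp add: power_int_eq_0_iff)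
  finally show "N dvd (s1 - s2)" using zeta_powi_eq_1[OF N] by simp
qed


lemma dvd_pm1: "(\<mu>::int) = 1 \<or> \<mu> = -1 \<Longrightarrow> N dvd (\<mu> * x) \<Longrightarrow> N dvd x"
  by auto

lemma final_value:
  fixes N r1 s1 r2 s2 :: int
  assumes N2: "N > 2"
    and h1: "\<not> (N dvd r1 \<and> N dvd s1)"
    and h2: "\<not> (N dvd r2 \<and> N dvd s2)"
    and h3: "\<not> (N dvd (r1 - r2) \<and> N dvd (s1 - s2))"
    and h4: "\<not> (N dvd (r1 + r2) \<and> N dvd (s1 + s2))"
    and h5: "brace N r2 \<ge> brace N r1"
  defines "A1 \<equiv> r1 mod N" and "A2 \<equiv> r2 mod N" and "M \<equiv> brace N r1"
  defines "lf \<equiv> \<lambda>(c::complex) A. (if A = M \<and> 0 < A then c else 0) + (if N - A = M then inverse c else 0)"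
  defines "kf \<equiv> \<lambda>c A. if A = (0::int) then Gq c else 0"
  defines "Anum \<equiv> lf (zeta N powi s1) A1 - lf (zeta N powi s2) A2 + kf (zeta N powi s1) A1 - kf (zeta N powi s2) A2"
  defines "Aden \<equiv> lf (zeta N powi (-s1)) A1 - lf (zeta N powi (-s2)) A2 + kf (zeta N powi (-s1)) A1 - kf (zeta N powi (-s2)) A2"
  shows "Aden \<noteq> 0 \<and> Anum / Aden =
     (if brace N r2 = brace N r1 \<and> brace N r1 \<noteq> 0 \<and> 2 * brace N r1 \<noteq> N
      then - (zeta N powi (mu N r1 * s1 + mu N r2 * s2))
      else if brace N r2 > brace N r1 \<and> brace N r1 \<noteq> 0
      then zeta N powi (2 * mu N r1 * s1)
      else 1)"
proof -
  have N: "N > 0" using N2 by simp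
  define c1 where "c1 = zeta N powi s1"
  define c2 where "c2 = zeta N powi s2"
  have i1: "zeta N powi (-s1) = inverse c1" using zeta_facts(2)[OF N, of s1] by (simp add: c1_def)
  have i2: "zeta N powi (-s2) = inverse c2" using zeta_facts(2)[OF N, of s2] by (simp add: c2_def)
  have c10: "c1 \<noteq> 0" and c20: "c2 \<noteq> 0" using zeta_facts(6)[OF N] by (auto simp: c1_def c2_def)
  have cc12: "c1 * c2 = 1 \<Longrightarrow> N dvd (s1 + s2)" using zeta_facts(4)[OF N] by (simp add: c1_def c2_def)
  have ce12: "c1 = c2 \<Longrightarrow> N dvd (s1 - s2)" using zeta_facts(3)[OF N] by (simp add: c1_def c2_def)
  have c11: "c1 = 1 \<Longrightarrow> N dvd s1" using zeta_facts(5)[OF N] by (simp add: c1_def)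
  have c21: "c2 = 1 \<Longrightarrow> N dvd s2" using zeta_facts(5)[OF N] by (simp add: c2_def)
  have A1r: "0 \<le> A1" "A1 < N" using N by (auto simp: A1_def)
  have A2r: "0 \<le> A2" "A2 < N" using N by (auto simp: A2_def)
  have B1: "brace N r1 = (if 2 * A1 \<le> N then A1 else N - A1)" by (simp add: brace_def A1_def)
  have B2: "brace N r2 = (if 2 * A2 \<le> N then A2 else N - A2)" by (simp add: brace_def A2_def)
  have mu1: "mu N r1 = (if A1 = 0 \<or> 2 * A1 = N then 1 else if 2 * A1 < N then 1 else -1)"
    by (simp add: mu_def A1_def)
  have mu2: "mu N r2 = (if A2 = 0 \<or> 2 * A2 = N then 1 else if 2 * A2 < N then 1 else -1)"
    by (simp add: mu_def A2_def)
  have d1: "N dvd r1 \<longleftrightarrow> A1 = 0" by (simp add: A1_def dvd_eq_mod_eq_0)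
  have d2: "N dvd r2 \<longleftrightarrow> A2 = 0" by (simp add: A2_def dvd_eq_mod_eq_0)
  have dm: "N dvd (r1 - r2) \<longleftrightarrow> A1 = A2" by (simp add: A1_def A2_def mod_eq_dvd_iff)
  have dp: "N dvd (r1 + r2)" if "A1 + A2 = N \<or> A1 + A2 = 0"
  proof -
    have "(r1 + r2) mod N = (A1 + A2) mod N" by (simp add: A1_def A2_def mod_add_eq)
    also have "\<dots> = 0" using that by auto
    finally show ?thesis by (simp add: dvd_eq_mod_eq_0)
  qed
  show ?thesis
  proof (cases "M = 0")
    case True
    have A1z: "A1 = 0" using True A1r B1 by (simp add: M_def split: if_splits)
    have l1: "lf c A1 = 0" for c using A1z True A1r by (simp add: lf_def)
    have l2: "lf c A2 = 0" for c using True A2r by (auto simp: lf_def)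
    have c1n: "c1 \<noteq> 1" using c11 h1 d1 A1z by auto
    have num: "Anum = Gq c1 - kf c2 A2" using l1 l2 A1z by (simp add: Anum_def kf_def c1_def c2_def)
    have den: "Aden = Gq c1 - kf c2 A2"
      using l1 l2 A1z by (simp add: Aden_def kf_def i1 i2 Gq_inverse)
    have nz: "Gq c1 - kf c2 A2 \<noteq> 0"
    proof (cases "A2 = 0")
      case True
      have c2n: "c2 \<noteq> 1" using c21 h2 d2 True by auto
      have "c1 \<noteq> c2" using ce12 h3 dm A1z True by auto
      moreover have "c1 * c2 \<noteq> 1" using cc12 h4 dp A1z True by auto
      ultimately have "Gq c1 \<noteq> Gq c2" using Gq_eq_cases[OF c1n c2n] by blast
      thus ?thesis using True by (simp add: kf_def)
    next
      case False
      thus ?thesis using Gq_nz[OF c10 c1n] by (simp add: kf_def)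
    qed
    have "brace N r1 = 0" using True by (simp add: M_def)
    thus ?thesis using num den nz by simp
  next
    case False
    have M0: "M > 0" using False A1r B1 by (simp add: M_def split: if_splits)
    have A1nz: "A1 \<noteq> 0" using M0 B1 A1r by (auto simp: M_def split: if_splits)
    have B2M: "brace N r2 \<ge> M" using h5 by (simp add: M_def)
    have A2nz: "A2 \<noteq> 0" using M0 B2M B2 A2r by (auto split: if_splits)
    have k1: "kf c A1 = 0" "kf c A2 = 0" for c using A1nz A2nz by (simp_all add: kf_def)
    have num: "Anum = lf c1 A1 - lf c2 A2" by (simp add: Anum_def k1 c1_def c2_def)
    have den: "Aden = lf (inverse c1) A1 - lf (inverse c2) A2" by (simp add: Aden_def k1 i1 i2)
    have lA: "lf c A = (if A = M then c else 0) + (if N - A = M then inverse c else 0)" if "A > 0" for c A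
      using that by (simp add: lf_def)
    consider (a) "brace N r2 > M" | (b) "brace N r2 = M" "2 * M = N" | (c) "brace N r2 = M" "2 * M \<noteq> N"
      using B2M by linarith
    thus ?thesis
    proof cases
      case a
      have l2: "lf c A2 = 0" for c using a B2 A2r A2nz by (simp add: lf_def split: if_splits)
      have M2: "2 * M < N" using a B2 A2r by (auto split: if_splits)
      show ?thesis
      proof (cases "2 * A1 \<le> N")
        case True
        have MA: "M = A1" using True B1 by (simp add: M_def)
        have l1: "lf c A1 = c" for c using MA M2 A1r A1nz by (simp add: lf_def)
        have m1: "mu N r1 = 1" using mu1 MA M2 by simp
        have "Anum / Aden = c1 / inverse c1" using num den l1 l2 by simp
        also have "\<dots> = c1 * c1" by (simp add: divide_inverse)
        also have "\<dots> = zeta N powi (2 * mu N r1 * s1)"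
          using zeta_facts(1)[OF N, of s1 s1] m1 by (simp add: c1_def)
        finally have r: "Anum / Aden = zeta N powi (2 * mu N r1 * s1)" .
        have "Aden \<noteq> 0" using den l1 l2 c10 by simp
        thus ?thesis using r a False by (simp add: M_def)
      next
        case False
        have MA: "M = N - A1" using False B1 by (simp add: M_def)
        have l1: "lf c A1 = inverse c" for c using MA M2 A1r A1nz by (simp add: lf_def)
        have m1: "mu N r1 = -1" using mu1 False A1nz by simp
        have "Anum / Aden = inverse c1 / c1" using num den l1 l2 by simp
        also have "\<dots> = zeta N powi (-s1) * zeta N powi (-s1)" using i1 by (simp add: divide_inverse)
        also have "\<dots> = zeta N powi (2 * mu N r1 * s1)"
          using zeta_facts(1)[OF N, of "-s1" "-s1"] m1 by simp
        finally have r: "Anum / Aden = zeta N powi (2 * mu N r1 * s1)" .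
        have "Aden \<noteq> 0" using den l1 l2 c10 by simp
        thus ?thesis using r a M0 by (simp add: M_def)
      qed
    next
      case b
      have A1M: "A1 = M" "N - A1 = M" using b B1 A1r by (auto simp: M_def split: if_splits)
      have A2M: "A2 = M" "N - A2 = M" using b B2 A2r by (auto split: if_splits)
      have l: "lf c A1 = c + inverse c" "lf c A2 = c + inverse c" for c
        using A1M A2M M0 by (simp_all add: lf_def)
      have num': "Anum = (c1 + inverse c1) - (c2 + inverse c2)" using num l by simp
      have den': "Aden = (c1 + inverse c1) - (c2 + inverse c2)" using den l by (simp add: add.commute)
      have "c1 \<noteq> c2" using ce12 h3 dm A1M A2M by auto
      moreover have "c1 * c2 \<noteq> 1" using cc12 h4 dp A1M A2M by auto
      ultimately have "c1 + inverse c1 \<noteq> c2 + inverse c2" using sum_inv_eq_cases[OF c10 c20] by blast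
      hence "Aden \<noteq> 0" "Anum / Aden = 1" using num' den' by auto
      moreover have "\<not> (brace N r2 > brace N r1)" using b by (simp add: M_def)
      moreover have "2 * brace N r1 = N" using b by (simp add: M_def)
      ultimately show ?thesis by simp
    next
      case c
      have M2: "2 * M < N" using c B1 A1r by (auto simp: M_def split: if_splits)
      define e1 where "e1 = (if 2 * A1 < N then c1 else inverse c1)"
      define e2 where "e2 = (if 2 * A2 < N then c2 else inverse c2)"
      have l1: "lf c1 A1 = e1" "lf (inverse c1) A1 = inverse e1"
        using B1 M2 A1r A1nz by (auto simp: e1_def lf_def M_def split: if_splits)
      have l2: "lf c2 A2 = e2" "lf (inverse c2) A2 = inverse e2"
        using B2 c M2 A2r A2nz by (auto simp: e2_def lf_def split: if_splits)
      have mu1': "mu N r1 = (if 2 * A1 < N then 1 else -1)" using mu1 A1nz M2 B1 by (auto simp: M_def split: if_splits)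
      have mu2': "mu N r2 = (if 2 * A2 < N then 1 else -1)" using mu2 A2nz M2 B2 c by (auto split: if_splits)
      have e1z: "e1 = zeta N powi (mu N r1 * s1)" using mu1' i1 by (simp add: e1_def c1_def)
      have e2z: "e2 = zeta N powi (mu N r2 * s2)" using mu2' i2 by (simp add: e2_def c2_def)
      have e10: "e1 \<noteq> 0" and e20: "e2 \<noteq> 0" using c10 c20 by (auto simp: e1_def e2_def)
      have ne: "e1 \<noteq> e2"
      proof
        assume e: "e1 = e2"
        hence dv: "N dvd (mu N r1 * s1 - mu N r2 * s2)" using zeta_facts(3)[OF N] e1z e2z by simp
        show False
        proof (cases "(2 * A1 < N) = (2 * A2 < N)")
          case True
          have "A1 = A2" using True B1 B2 c by (auto simp: M_def split: if_splits)
          moreover have "mu N r1 = mu N r2" using True mu1' mu2' by simp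
          moreover have "mu N r1 = 1 \<or> mu N r1 = -1" using mu1' by auto
          ultimately have "N dvd (r1 - r2)" "N dvd (s1 - s2)"
            using dm dv dvd_pm1[of "mu N r1" N "s1 - s2"] by (auto simp: right_diff_distrib)
          thus False using h3 by blast
        next
          case False
          have "A1 + A2 = N" using False B1 B2 c by (auto simp: M_def split: if_splits)
          moreover have "mu N r2 = - mu N r1" using False mu1' mu2' by auto
          moreover have "mu N r1 = 1 \<or> mu N r1 = -1" using mu1' by auto
          ultimately have "N dvd (r1 + r2)" "N dvd (s1 + s2)"
            using dp dv dvd_pm1[of "mu N r1" N "s1 + s2"] by (auto simp: distrib_left)
          thus False using h4 by blast
        qed
      qed
      have num': "Anum = e1 - e2" using num l1 l2 by simp
      have den': "Aden = inverse e1 - inverse e2" using den l1 l2 by simp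
      have dnz: "Aden \<noteq> 0" using den' ne e10 e20 by (auto simp: inverse_eq_iff_eq)
      have "Anum / Aden = - (e1 * e2)"
      proof -
        have "inverse e1 - inverse e2 = (e2 - e1) / (e1 * e2)" using e10 e20 by (simp add: field_simps)
        hence "Aden = (e2 - e1) / (e1 * e2)" using den' by simp
        moreover have "e2 - e1 \<noteq> 0" using ne by simp
        ultimately have "Anum / Aden = (- (e2 - e1)) * (e1 * e2) / (e2 - e1)"
          using num' by (simp add: divide_divide_eq_right)
        also have "\<dots> = - ((e2 - e1) * (e1 * e2) / (e2 - e1))" by (simp only: mult_minus_left minus_divide_left)
        also have "(e2 - e1) * (e1 * e2) / (e2 - e1) = e1 * e2" using \<open>e2 - e1 \<noteq> 0\<close> by (rule nonzero_mult_div_cancel_left)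
        finally show ?thesis .
      qed
      also have "\<dots> = - (zeta N powi (mu N r1 * s1 + mu N r2 * s2))"
        using zeta_facts(1)[OF N] e1z e2z by simp
      finally show ?thesis using dnz c False by (simp add: M_def)
    qed
  qed
qed


lemma brace_bounds:
  fixes N r :: int assumes "N > 0"
  shows "0 \<le> brace N r" "brace N r \<le> r mod N" "brace N r \<le> N - r mod N"
        "brace N r = 0 \<longleftrightarrow> r mod N = 0"
  using pos_mod_bound[OF assms, of r] pos_mod_sign[OF assms, of r]
  by (auto simp: brace_def)

lemma Pf_lim_int:
  fixes N A M :: int and c :: complex
  assumes N: "N > 0" and c: "norm c = 1" and A: "0 \<le> A" "A < N" and M: "0 \<le> M" "M \<le> A" "M \<le> N - A"
  shows "((\<lambda>q. (Pf (nat N) c (nat A) q - (if A = 0 then Gq c else 0)) / q^(nat M)) \<longlongrightarrow>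
           ((if A = M \<and> 0 < A then c else 0) + (if N - A = M then inverse c else 0))) (at 0)"
proof -
  have e1: "(nat A = nat M \<and> 0 < nat A) \<longleftrightarrow> (A = M \<and> 0 < A)" using A M by auto
  have e2: "(nat N - nat A = nat M) \<longleftrightarrow> (N - A = M)" using A M N by auto
  have e3: "(nat A = 0) \<longleftrightarrow> A = 0" using A by auto
  have "((\<lambda>q. (Pf (nat N) c (nat A) q - (if nat A = 0 then Gq c else 0)) / q^(nat M)) \<longlongrightarrow>
           ((if nat A = nat M \<and> 0 < nat A then c else 0) + (if nat N - nat A = nat M then inverse c else 0))) (at 0)"
    by (rule Pf_lim[OF c]) (use A M N in auto)
  thus ?thesis unfolding e1 e2 e3 .
qed

theorem lemma3p3:
  fixes N r1 s1 r2 s2 :: int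
  assumes "N > 2"
    and "\<not> (N dvd r1 \<and> N dvd s1)"
    and "\<not> (N dvd r2 \<and> N dvd s2)"
    and "\<not> (N dvd (r1 - r2) \<and> N dvd (s1 - s2))"
    and "\<not> (N dvd (r1 + r2) \<and> N dvd (s1 + s2))"
    and "brace N r2 \<ge> brace N r1"
  shows "leading_coeff_q N (\<lambda>tau. Wfun N tau r1 s1 r2 s2)
     (if brace N r2 = brace N r1 \<and> brace N r1 \<noteq> 0 \<and> 2 * brace N r1 \<noteq> N
      then - (zeta N powi (mu N r1 * s1 + mu N r2 * s2))
      else if brace N r2 > brace N r1 \<and> brace N r1 \<noteq> 0
      then zeta N powi (2 * mu N r1 * s1)
      else 1)"
proof -
  note h = assms
  define T where "T = (if brace N r2 = brace N r1 \<and> brace N r1 \<noteq> 0 \<and> 2 * brace N r1 \<noteq> N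
      then - (zeta N powi (mu N r1 * s1 + mu N r2 * s2))
      else if brace N r2 > brace N r1 \<and> brace N r1 \<noteq> 0
      then zeta N powi (2 * mu N r1 * s1)
      else 1)"
  have N: "N > 0" using h(1) by simp
  define A1 where "A1 = r1 mod N"
  define A2 where "A2 = r2 mod N"
  define M where "M = brace N r1"
  define lf where "lf = (\<lambda>(c::complex) A. (if A = M \<and> 0 < A then c else 0) + (if N - A = M then inverse c else 0))"
  define kf where "kf = (\<lambda>c A. if A = (0::int) then Gq c else 0)"
  define Anum where "Anum = lf (zeta N powi s1) A1 - lf (zeta N powi s2) A2 + kf (zeta N powi s1) A1 - kf (zeta N powi s2) A2"
  define Aden where "Aden = lf (zeta N powi (-s1)) A1 - lf (zeta N powi (-s2)) A2 + kf (zeta N powi (-s1)) A1 - kf (zeta N powi (-s2)) A2"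
  have fv: "Aden \<noteq> 0 \<and> Anum / Aden = T"
    unfolding Aden_def Anum_def lf_def kf_def M_def A1_def A2_def T_def
    by (rule final_value[OF h])
  have A1r: "0 \<le> A1" "A1 < N" using N by (auto simp: A1_def)
  have A2r: "0 \<le> A2" "A2 < N" using N by (auto simp: A2_def)
  have Mb: "0 \<le> M" "M \<le> A1" "M \<le> N - A1" using brace_bounds[OF N, of r1] by (auto simp: M_def A1_def)
  have Mb2: "M \<le> A2" "M \<le> N - A2" using brace_bounds[OF N, of r2] h(6) by (auto simp: M_def A2_def)
  define m where "m = nat M"
  define Nn where "Nn = nat N"
  define a1 where "a1 = nat A1"
  define a2 where "a2 = nat A2"
  define X where "X = (\<lambda>c A q. (Pf Nn c (nat A) q - kf c A) / q^m)"
  have LX: "((X c A) \<longlongrightarrow> lf c A) (at 0)" if "norm c = 1" "0 \<le> A" "A < N" "M \<le> A" "M \<le> N - A" for c A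
    unfolding X_def lf_def kf_def m_def Nn_def
    by (rule Pf_lim_int[OF N that(1-3) Mb(1) that(4,5)])
  have kconst: "(kf c1 A1 - kf c2 A2) / q^m = kf c1 A1 - kf c2 A2" for c1 c2 q
  proof (cases "M = 0")
    case True thus ?thesis by (simp add: m_def)
  next
    case False
    hence "A1 \<noteq> 0" "A2 \<noteq> 0" using Mb Mb2 by auto
    thus ?thesis by (simp add: kf_def)
  qed
  define Phi where "Phi = (\<lambda>d1 d2 q. (Pf Nn d1 a1 q - Pf Nn d2 a2 q) / q^m)"
  have Phi_eq: "Phi d1 d2 q = X d1 A1 q - X d2 A2 q + (kf d1 A1 - kf d2 A2)" for d1 d2 q
  proof -
    have "Phi d1 d2 q = X d1 A1 q - X d2 A2 q + (kf d1 A1 - kf d2 A2) / q^m"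
      by (simp add: Phi_def X_def a1_def a2_def diff_divide_distrib add_divide_distrib)
    thus ?thesis by (simp only: kconst)
  qed
  have LPhi: "((Phi d1 d2) \<longlongrightarrow> lf d1 A1 - lf d2 A2 + (kf d1 A1 - kf d2 A2)) (at 0)"
    if "norm d1 = 1" "norm d2 = 1" for d1 d2
    unfolding Phi_eq
    by (intro tendsto_intros LX that A1r A2r Mb Mb2)
  have an: "Anum = lf (zeta N powi s1) A1 - lf (zeta N powi s2) A2 + (kf (zeta N powi s1) A1 - kf (zeta N powi s2) A2)"
    by (simp add: Anum_def)
  have ad: "Aden = lf (zeta N powi (-s1)) A1 - lf (zeta N powi (-s2)) A2 + (kf (zeta N powi (-s1)) A1 - kf (zeta N powi (-s2)) A2)"
    by (simp add: Aden_def)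
  have Lnum: "((Phi (zeta N powi s1) (zeta N powi s2)) \<longlongrightarrow> Anum) (at 0)"
    unfolding an by (rule LPhi[OF norm_zeta_powi norm_zeta_powi])
  have Lden: "((Phi (zeta N powi (-s1)) (zeta N powi (-s2))) \<longlongrightarrow> Aden) (at 0)"
    unfolding ad by (rule LPhi[OF norm_zeta_powi norm_zeta_powi])
  have Lq: "((\<lambda>q. Phi (zeta N powi s1) (zeta N powi s2) q / Phi (zeta N powi (-s1)) (zeta N powi (-s2)) q)
              \<longlongrightarrow> Anum / Aden) (at 0)"
    using fv by (intro tendsto_divide Lnum Lden) auto
  have LF: "((\<lambda>\<tau>. Phi (zeta N powi s1) (zeta N powi s2) (qpar N \<tau>) /
                   Phi (zeta N powi (-s1)) (zeta N powi (-s2)) (qpar N \<tau>))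
              \<longlongrightarrow> Anum / Aden) (filtercomap Im at_top)"
    by (rule filterlim_compose[OF Lq qpar_filterlim[OF N]])
  have evq: "eventually (\<lambda>\<tau>. qpar N \<tau> \<noteq> 0 \<and> norm (qpar N \<tau>) \<le> 1/2) (filtercomap Im at_top)"
    using filterlim_iff[THEN iffD1, OF qpar_filterlim[OF N]] ev_small by blast
  have ev: "eventually (\<lambda>\<tau>. Wfun N \<tau> r1 s1 r2 s2 =
              Phi (zeta N powi s1) (zeta N powi s2) (qpar N \<tau>) /
              Phi (zeta N powi (-s1)) (zeta N powi (-s2)) (qpar N \<tau>)) (filtercomap Im at_top)"
    using evq ev_Im_pos
  proof eventually_elim
    case (elim \<tau>)
    have h1': "\<not> (N dvd r1 \<and> N dvd (-s1))" using h(2) by simp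
    have h2': "\<not> (N dvd r2 \<and> N dvd (-s2))" using h(3) by simp
    have qm: "qpar N \<tau> ^ m \<noteq> 0" using elim by simp
    have "Wfun N \<tau> r1 s1 r2 s2 =
        (Pf Nn (zeta N powi s1) a1 (qpar N \<tau>) - Pf Nn (zeta N powi s2) a2 (qpar N \<tau>)) /
        (Pf Nn (zeta N powi (-s1)) a1 (qpar N \<tau>) - Pf Nn (zeta N powi (-s2)) a2 (qpar N \<tau>))"
      unfolding Wfun_def
      using E_diff_Pf[OF N h(2,3), of \<tau>] E_diff_Pf[OF N h1' h2', of \<tau>] elim
      by (simp add: Nn_def a1_def a2_def A1_def A2_def)
    also have "\<dots> = Phi (zeta N powi s1) (zeta N powi s2) (qpar N \<tau>) /
              Phi (zeta N powi (-s1)) (zeta N powi (-s2)) (qpar N \<tau>)"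
      unfolding Phi_def using qm by (simp add: divide_divide_eq_left)
    finally show ?case .
  qed
  have "((\<lambda>\<tau>. Wfun N \<tau> r1 s1 r2 s2) \<longlongrightarrow> T) (filtercomap Im at_top)"
    using tendsto_cong[OF ev] LF fv by simp
  hence lim: "((\<lambda>\<tau>. Wfun N \<tau> r1 s1 r2 s2 / qpar N \<tau> powi 0) \<longlongrightarrow> T) (filtercomap Im at_top)" by simp
  have Tnz: "T \<noteq> 0" using zeta_facts(6)[OF N] by (simp add: T_def)
  show ?thesis unfolding T_def[symmetric] leading_coeff_q_def using Tnz lim by blast
qed


end
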